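(* Let $M$ be a positive integer and let $K$ be an integer with $q_{KL}-1\le K\le M$. Then \[\mathcal U(M)\cap\mathcal U(K)=(1,K+1]\cap\mathcal U(M).\]
   Context: For a positive integer $J$, $\mathcal U(J)$ is the set of $q\in(1,J+1]$ such that $1$ has exactly one expansion $1=\sum_{i\ge1}d_iq^{-i}$ with $d_i\in\{0,1,\dots,J\}$. For $q\in(1,M+1]$, $\alpha(q)$ is the quasi-greedy $q$-expansion of $1$ over $\{0,1,\dots,M\}$ (lexicographically largest sequence not ending in $0^\infty$ with $\sum a_iq^{-i}=1$). Let $(\tau_i)_{i\ge0}$ be the Thue–Morse sequence; $q_{KL}=q_{KL}(M)$ is the base with $\alpha(q_{KL})=\lambda_1\lambda_2\dots$, $\lambda_i=k+\tau_i-\tau_{i-1}$ if $M=2k$, $\lambda_i=k+\tau_i$ if $M=2k+1$. *)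

theory Defs
  imports Complex_Main
begin

text \<open>Sequences are indexed from 0: d i is the digit d_(i+1), weighted by q^-(i+1).\<close>

definition expansion :: "nat \<Rightarrow> real \<Rightarrow> (nat \<Rightarrow> nat) \<Rightarrow> bool" where
  "expansion J q d \<longleftrightarrow> (\<forall>i. d i \<le> J) \<and> (\<lambda>i. real (d i) / q ^ Suc i) sums 1"

definition univoque :: "nat \<Rightarrow> real set" where
  "univoque J = {q. 1 < q \<and> q \<le> real J + 1 \<and> (\<exists>!d. expansion J q d)}"

definition lex_less :: "(nat \<Rightarrow> nat) \<Rightarrow> (nat \<Rightarrow> nat) \<Rightarrow> bool" where
  "lex_less a b \<longleftrightarrow> (\<exists>n. (\<forall>i<n. a i = b i) \<and> a n < b n)"

definition quasi_greedy :: "nat \<Rightarrow> real \<Rightarrow> (nat \<Rightarrow> nat) \<Rightarrow> bool" where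
  "quasi_greedy M q a \<longleftrightarrow> expansion M q a \<and> infinite {i. a i \<noteq> 0} \<and>
     (\<forall>b. expansion M q b \<and> infinite {i. b i \<noteq> 0} \<longrightarrow> \<not> lex_less a b)"

definition alpha :: "nat \<Rightarrow> real \<Rightarrow> (nat \<Rightarrow> nat)" where
  "alpha M q = (THE a. quasi_greedy M q a)"

fun thue_morse :: "nat \<Rightarrow> nat" where
  "thue_morse n = (if n = 0 then 0 else (thue_morse (n div 2) + n mod 2) mod 2)"

text \<open>lambda_seq M i = \<lambda>_(i+1).\<close>
definition lambda_seq :: "nat \<Rightarrow> nat \<Rightarrow> nat" where
  "lambda_seq M i = (if even M
     then nat (int (M div 2) + int (thue_morse (Suc i)) - int (thue_morse i))
     else M div 2 + thue_morse (Suc i))"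

definition q_KL :: "nat \<Rightarrow> real" where
  "q_KL M = (THE q. 1 < q \<and> q \<le> real M + 1 \<and> alpha M q = lambda_seq M)"

end

theory Submission
  imports Defs "HOL-Analysis.Elementary_Normed_Spaces"
begin

definition val :: "real \<Rightarrow> (nat \<Rightarrow> nat) \<Rightarrow> real" where
  "val q e = suminf (\<lambda>i. real (e i) / q ^ Suc i)"

lemma geo_sums:
  fixes q :: real and M :: nat
  assumes "q > 1"
  shows "(\<lambda>i. real M / q ^ Suc i) sums (real M / (q - 1))"
proof -
  have "(\<lambda>i. (1/q) ^ i) sums (1 / (1 - 1/q))"
    using assms by (intro geometric_sums) auto
  then have s: "(\<lambda>i. (real M / q) * (1/q) ^ i) sums ((real M / q) * (1 / (1 - 1/q)))"
    by (rule sums_mult)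
  have c: "(real M / q) * (1 / (1 - 1/q)) = real M / (q - 1)"
    using assms by (simp add: field_simps)
  have h: "(\<lambda>i. (real M / q) * (1/q) ^ i) = (\<lambda>i. real M / q ^ Suc i)"
    by (rule ext) (simp add: field_simps power_divide)
  show ?thesis using s unfolding c h .
qed

lemma bdd_summable:
  assumes "q > 1" "\<forall>i. e i \<le> M"
  shows "summable (\<lambda>i. real (e i) / q ^ Suc i)"
    and "0 \<le> val q e" and "val q e \<le> real M / (q - 1)"
proof -
  have le: "\<And>i. norm (real (e i) / q ^ Suc i) \<le> real M / q ^ Suc i"
    using assms by (auto intro!: divide_right_mono)
  have sM: "summable (\<lambda>i. real M / q ^ Suc i)"
    using geo_sums[OF assms(1)] sums_summable by blast
  show s: "summable (\<lambda>i. real (e i) / q ^ Suc i)"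
    by (rule summable_comparison_test[OF _ sM]) (use le in auto)
  show "0 \<le> val q e" unfolding val_def
    using assms by (intro suminf_nonneg[OF s]) auto
  have "val q e \<le> (\<Sum>i. real M / q ^ Suc i)" unfolding val_def
    using le assms by (intro suminf_le[OF _ s sM]) (auto intro!: divide_right_mono)
  also have "\<dots> = real M / (q - 1)" using geo_sums[OF assms(1)] sums_unique by metis
  finally show "val q e \<le> real M / (q - 1)" .
qed

lemma sums_split:
  assumes "q > 1" "\<forall>i. g i \<le> M"
  shows "(\<lambda>i. real (g i) / q ^ Suc i) sums
     ((\<Sum>i<k. real (g i) / q ^ Suc i) + val q (\<lambda>i. g (k + i)) / q ^ k)"
proof -
  have s: "summable (\<lambda>i. real (g i) / q ^ Suc i)" using bdd_summable[OF assms] by blast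
  have s2: "summable (\<lambda>i. real (g (k + i)) / q ^ Suc i)"
    using assms(2) by (intro bdd_summable(1)[OF assms(1)]) auto
  have eq: "(\<lambda>i. real (g (i + k)) / q ^ Suc (i + k)) = (\<lambda>i. (real (g (k + i)) / q ^ Suc i) / q ^ k)"
    by (rule ext) (simp add: power_add add.commute mult.commute)
  have "suminf (\<lambda>i. real (g i) / q ^ Suc i)
     = (\<Sum>i. real (g (i + k)) / q ^ Suc (i + k)) + (\<Sum>i<k. real (g i) / q ^ Suc i)"
    using suminf_split_initial_segment[OF s, of k] by simp
  also have "(\<Sum>i. real (g (i + k)) / q ^ Suc (i + k)) = val q (\<lambda>i. g (k + i)) / q ^ k"
    unfolding eq val_def using suminf_divide[OF s2, of "q ^ k"] by simp
  finally show ?thesis using summable_sums[OF s] by (simp add: add.commute)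
qed

definition gdig :: "nat \<Rightarrow> real \<Rightarrow> real \<Rightarrow> nat" where
  "gdig M q y = min M (nat \<lfloor>q * y\<rfloor>)"

fun grem :: "nat \<Rightarrow> real \<Rightarrow> real \<Rightarrow> nat \<Rightarrow> real" where
  "grem M q x 0 = x"
| "grem M q x (Suc k) = q * grem M q x k - real (gdig M q (grem M q x k))"

lemma grem_inv:
  assumes "q > 1" "q \<le> real M + 1" "0 \<le> x" "x \<le> real M / (q - 1)"
  shows "0 \<le> grem M q x k \<and> grem M q x k \<le> real M / (q - 1)"
proof (induction k)
  case 0 then show ?case using assms by simp
next
  case (Suc k)
  define y where "y = grem M q x k"
  have y: "0 \<le> y" "y \<le> real M / (q - 1)" using Suc y_def by auto
  have qy: "q * y \<ge> 0" using y assms by simp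
  have one: "1 \<le> real M / (q - 1)" using assms by (simp add: field_simps)
  show ?case
  proof (cases "\<lfloor>q * y\<rfloor> \<ge> int M")
    case True
    then have g: "gdig M q y = M" unfolding gdig_def by simp
    have "q * y \<ge> real M" using True by linarith
    moreover have "q * y - real M \<le> real M / (q - 1)"
    proof -
      have "q * y \<le> q * (real M / (q - 1))" using y assms by (intro mult_left_mono) auto
      also have "q * (real M / (q - 1)) = real M + real M / (q - 1)"
        using assms by (simp add: field_simps)
      finally show ?thesis by simp
    qed
    ultimately show ?thesis using g y_def by simp
  next
    case False
    then have g: "real (gdig M q y) = of_int \<lfloor>q * y\<rfloor>" unfolding gdig_def using qy by simp
    have "q * y - of_int \<lfloor>q * y\<rfloor> < 1" "0 \<le> q * y - of_int \<lfloor>q * y\<rfloor>" by linarith+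
    then show ?thesis using g y_def one by simp
  qed
qed

lemma grem_sum:
  "x = (\<Sum>i<k. real (gdig M q (grem M q x i)) / q ^ Suc i) + grem M q x k / q ^ k"
  if "q > 1"
proof (induction k)
  case 0 then show ?case by simp
next
  case (Suc k)
  have "grem M q x (Suc k) / q ^ Suc k = grem M q x k / q ^ k - real (gdig M q (grem M q x k)) / q ^ Suc k"
    using that by (simp add: field_simps)
  then show ?case using Suc by simp
qed

lemma greedy:
  assumes "q > 1" "q \<le> real M + 1" "0 \<le> x" "x \<le> real M / (q - 1)"
  shows "\<exists>e. (\<forall>i. e i \<le> M) \<and> val q e = x"
proof -
  define e where "e = (\<lambda>i. gdig M q (grem M q x i))"
  have ebd: "\<forall>i. e i \<le> M" unfolding e_def gdig_def by simp
  have t0: "(\<lambda>k. grem M q x k / q ^ k) \<longlonglongrightarrow> 0"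
  proof (rule Lim_null_comparison)
    show "\<forall>\<^sub>F k in sequentially. norm (grem M q x k / q ^ k) \<le> real M / (q - 1) * (1/q) ^ k"
    proof (rule always_eventually, rule allI)
      fix k
      have "norm (grem M q x k / q ^ k) = grem M q x k / q ^ k"
        using grem_inv[OF assms, of k] assms by simp
      also have "\<dots> \<le> (real M / (q - 1)) / q ^ k"
        using grem_inv[OF assms, of k] assms by (intro divide_right_mono) auto
      also have "\<dots> = real M / (q - 1) * (1/q) ^ k" by (simp add: power_divide)
      finally show "norm (grem M q x k / q ^ k) \<le> real M / (q - 1) * (1/q) ^ k" .
    qed
    have "(\<lambda>k. (1/q) ^ k) \<longlonglongrightarrow> 0" using assms by (intro LIMSEQ_power_zero) auto
    then show "(\<lambda>k. real M / (q - 1) * (1/q) ^ k) \<longlonglongrightarrow> 0"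
      by (rule tendsto_mult_right_zero)
  qed
  have "(\<lambda>k. x - grem M q x k / q ^ k) \<longlonglongrightarrow> x - 0"
    by (intro tendsto_diff tendsto_const t0)
  moreover have "\<And>k. x - grem M q x k / q ^ k = (\<Sum>i<k. real (e i) / q ^ Suc i)"
    using grem_sum[OF assms(1), of x] unfolding e_def by (metis add_diff_cancel_right')
  ultimately have "(\<lambda>i. real (e i) / q ^ Suc i) sums x" unfolding sums_def by simp
  then show ?thesis using ebd unfolding val_def by (metis sums_unique)
qed

lemma modify:
  assumes q: "q > 1" and ex: "expansion M q d" and t: "t \<le> M" and e: "\<forall>i. e i \<le> M"
    and eq: "real t + val q e = real (d n) + val q (\<lambda>i. d (Suc n + i))"
  shows "expansion M q (\<lambda>i. if i < n then d i else if i = n then t else e (i - Suc n))"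
    (is "expansion M q ?d")
proof -
  have dbd: "\<forall>i. d i \<le> M" and ds: "(\<lambda>i. real (d i) / q ^ Suc i) sums 1"
    using ex unfolding expansion_def by auto
  have d'bd: "\<forall>i. ?d i \<le> M" using dbd t e by auto
  have s1: "(\<lambda>i. real (d i) / q ^ Suc i) sums
     ((\<Sum>i<Suc n. real (d i) / q ^ Suc i) + val q (\<lambda>i. d (Suc n + i)) / q ^ Suc n)"
    by (rule sums_split[OF q dbd])
  have s2: "(\<lambda>i. real (?d i) / q ^ Suc i) sums
     ((\<Sum>i<Suc n. real (?d i) / q ^ Suc i) + val q (\<lambda>i. ?d (Suc n + i)) / q ^ Suc n)"
    by (rule sums_split[OF q d'bd])
  have a: "(\<lambda>i. ?d (Suc n + i)) = e" by (rule ext) simp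
  have b: "(\<Sum>i<n. real (?d i) / q ^ Suc i) = (\<Sum>i<n. real (d i) / q ^ Suc i)"
    by (rule sum.cong) auto
  have "(\<Sum>i<Suc n. real (?d i) / q ^ Suc i) + val q (\<lambda>i. ?d (Suc n + i)) / q ^ Suc n
      = (\<Sum>i<n. real (d i) / q ^ Suc i) + (real t + val q e) / q ^ Suc n"
    using b a by (simp add: add_divide_distrib)
  also have "\<dots> = (\<Sum>i<Suc n. real (d i) / q ^ Suc i) + val q (\<lambda>i. d (Suc n + i)) / q ^ Suc n"
    using eq by (simp add: add_divide_distrib)
  also have "\<dots> = 1" using s1 ds sums_unique2 by blast
  finally show ?thesis using s2 d'bd unfolding expansion_def by simp
qed

lemma digits_le:
  assumes q1: "q > 1" and qK: "q \<le> real K + 1" and KM: "K < M"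
    and ex: "expansion M q d" and un: "\<forall>e. expansion M q e \<longrightarrow> e = d"
  shows "d n \<le> K"
proof -
  have qM: "q \<le> real M + 1" using qK KM by simp
  have dbd: "\<forall>i. d i \<le> M" and ds: "(\<lambda>i. real (d i) / q ^ Suc i) sums 1"
    using ex unfolding expansion_def by auto
  define r where "r n = val q (\<lambda>i. d (n + i))" for n
  have rbd: "0 \<le> r n \<and> r n \<le> real M / (q - 1)" for n
    using bdd_summable[OF q1, of "\<lambda>i. d (n+i)" M] dbd unfolding r_def by auto
  have r0: "r 0 = 1" unfolding r_def val_def using sums_unique[OF ds] by simp
  have rrec: "r n = (real (d n) + r (Suc n)) / q" for n
  proof -
    have "(\<lambda>i. real (d (n + i)) / q ^ Suc i) sums
       ((\<Sum>i<1. real (d (n + i)) / q ^ Suc i) + val q (\<lambda>i. d (n + (1 + i))) / q ^ 1)"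
      by (rule sums_split[OF q1]) (use dbd in auto)
    moreover have "(\<lambda>i. d (n + (1 + i))) = (\<lambda>i. d (Suc n + i))" by (rule ext) simp
    ultimately have "r n = real (d n) / q + r (Suc n) / q"
      unfolding r_def val_def by (simp add: sums_unique[symmetric])
    then show ?thesis by (simp add: add_divide_distrib)
  qed
  have A: "r (Suc m) > real M / (q - 1) - 1" if "d m > 0" for m
  proof (rule ccontr)
    assume "\<not> ?thesis"
    then obtain e where e: "\<forall>i. e i \<le> M" "val q e = r (Suc m) + 1"
      using greedy[OF q1 qM, of "r (Suc m) + 1"] rbd[of "Suc m"] by force
    have "expansion M q (\<lambda>i. if i < m then d i else if i = m then d m - 1 else e (i - Suc m))"
      (is "expansion M q ?d")
      by (rule modify[OF q1 ex _ e(1)]) (use that dbd[rule_format, of m] e(2) r_def in \<open>auto simp: of_nat_diff\<close>)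
    then have "?d = d" using un by blast
    then have "?d m = d m" by (rule fun_cong)
    then show False using that by simp
  qed
  have B: "r (Suc m) < 1" if "d m < M" for m
  proof (rule ccontr)
    assume "\<not> ?thesis"
    then obtain e where e: "\<forall>i. e i \<le> M" "val q e = r (Suc m) - 1"
      using greedy[OF q1 qM, of "r (Suc m) - 1"] rbd[of "Suc m"] by force
    have "expansion M q (\<lambda>i. if i < m then d i else if i = m then d m + 1 else e (i - Suc m))"
      (is "expansion M q ?d")
      by (rule modify[OF q1 ex _ e(1)]) (use that dbd e(2) r_def in auto)
    then have "?d = d" using un by blast
    then have "?d m = d m" by (rule fun_cong)
    then show False by simp
  qed
  have C: "r m > 1" if "d m \<ge> K + 1" for m
  proof -
    have "r (Suc m) > real M / (q - 1) - 1" using A that by simp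
    moreover have "real (d m) \<ge> real K + 1" using that by simp
    ultimately have "real (d m) + r (Suc m) > real K + real M / (q - 1)" by simp
    moreover have "real K + real M / (q - 1) \<ge> q"
    proof -
      have "1 \<le> real M / (q - 1)" using q1 qM by (simp add: field_simps)
      then show ?thesis using qK by simp
    qed
    ultimately have "real (d m) + r (Suc m) > q" by simp
    then have "q * 1 < q * r m" using rrec[of m] q1 by (simp add: field_simps)
    then show ?thesis using q1 by (simp add: mult_less_cancel_left_pos)
  qed
  show ?thesis
  proof (induction n)
    case 0 then show ?case using C[of 0] r0 by fastforce
  next
    case (Suc n)
    then have "r (Suc n) < 1" using B KM by simp
    then show ?case using C[of "Suc n"] by fastforce
  qed
qed

theorem lemma7p2:
  fixes M K :: nat
  assumes "M \<ge> 1" and "q_KL M - 1 \<le> real K" and "K \<le> M"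
  shows "univoque M \<inter> univoque K = {1<..real K + 1} \<inter> univoque M"
proof
  show "univoque M \<inter> univoque K \<subseteq> {1<..real K + 1} \<inter> univoque M"
    unfolding univoque_def by auto
next
  show "{1<..real K + 1} \<inter> univoque M \<subseteq> univoque M \<inter> univoque K"
  proof
    fix q assume qin: "q \<in> {1<..real K + 1} \<inter> univoque M"
    then have q1: "q > 1" and qK: "q \<le> real K + 1" and uM: "\<exists>!d. expansion M q d"
      unfolding univoque_def by auto
    then obtain d where ex: "expansion M q d" and un: "\<forall>e. expansion M q e \<longrightarrow> e = d" by blast
    have dK: "\<forall>i. d i \<le> K"
    proof (cases "K = M")
      case True then show ?thesis using ex unfolding expansion_def by simp
    next
      case False
      then have "K < M" using assms(3) by simp
      then show ?thesis using digits_le[OF q1 qK _ ex un] by blast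
    qed
    have "expansion K q d" using ex dK unfolding expansion_def by simp
    moreover have "expansion K q e \<Longrightarrow> e = d" for e
      using un assms(3) unfolding expansion_def by (meson le_trans)
    ultimately have "\<exists>!d. expansion K q d" by blast
    then show "q \<in> univoque M \<inter> univoque K" using qin q1 qK unfolding univoque_def by auto
  qed
qed

end
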